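(* Let $f:\mathbb{R}^n\to\mathbb{R}$ be bounded below and twice continuously differentiable with $\nabla^2 f$ Lipschitz with constant $L_{\nabla^2 f}$. Let $x\in\mathbb{R}^n$, $\Delta>0$, $p=(n+1)(n+2)/2$ and points $y_1,\ldots,y_p$ with $\|y_i-x\|\le\beta\Delta$ for some $\beta>0$ and all $i$. Let $\hat Q\in\mathbb{R}^{p\times p}$ have $i$-th row $\phi(\hat s_i)^T$ with $\hat s_i=(y_i-x)/\Delta$, and assume $\hat Q$ is invertible. Let $c\in\mathbb{R}$, $g\in\mathbb{R}^n$, $H\in\mathbb{R}^{n\times n}$ symmetric be defined by $\hat Q\begin{bmatrix}c\\ \Delta g\\ \Delta^2\,\mathrm{upper}(H)\end{bmatrix}=\begin{bmatrix}f(y_1)\\ \vdots\\ f(y_p)\end{bmatrix}$, and $m(y)=c+g^T(y-x)+\tfrac12(y-x)^TH(y-x)$. Then for all $y\in B(x,\Delta)$: $|m(y)-f(y)|\le\kappa_{\mathrm{mf}}\Delta^3$, $\|\nabla m(y)-\nabla f(y)\|\le\kappa_{\mathrm{mg}}\Delta^2$ and $\|\nabla^2m(y)-\nabla^2f(y)\|\le\kappa_{\mathrm{mh}}\Delta$, where, with $A:=L_{\nabla^2 f}\left(n+\sqrt n+\tfrac32\right)\beta^3\|\hat Q^{-1}\|_\infty$, $$\kappa_{\mathrm{mf}}=\tfrac16A+\tfrac{L_{\nabla^2 f}}{6},\quad\kappa_{\mathrm{mg}}=\tfrac{17}{3}A+\tfrac{L_{\nabla^2 f}}{2},\quad\kappa_{\mathrm{mh}}=4A+L_{\nabla^2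 f}.$$
   Context: $\phi:\mathbb{R}^n\to\mathbb{R}^p$ is the natural quadratic basis $\phi(z)=[1,z_1,\ldots,z_n,\tfrac12z_1^2,z_1z_2,\ldots,z_1z_n,\tfrac12z_2^2,z_2z_3,\ldots,z_{n-1}z_n,\tfrac12z_n^2]^T$, and $\mathrm{upper}(H)=[H_{1,1},H_{1,2},\ldots,H_{1,n},H_{2,2},H_{2,3},\ldots,H_{n-1,n},H_{n,n}]^T$, so that $m(y)=\phi(y-x)^T[c;g;\mathrm{upper}(H)]$. $\|A\|_\infty$ is the maximum absolute row sum; other norms Euclidean/operator 2-norm; $B(x,\Delta)=\{y:\|y-x\|\le\Delta\}$. *)

theory Defs
  imports "HOL-Analysis.Analysis"
begin

text \<open>Coordinates of R^n are indexed by a finite linearly ordered type 'n;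
  the order plays the role of the index order 1,...,n.\<close>

definition coords :: "('n::{finite,linorder}) list" where
  "coords = sorted_list_of_set UNIV"

definition qpairs :: "(('n::{finite,linorder}) \<times> 'n) list" where
  "qpairs = concat (map (\<lambda>i. map (\<lambda>j. (i, j)) (filter (\<lambda>j. i \<le> j) coords)) coords)"

definition phi :: "(real, 'n::{finite,linorder}) vec \<Rightarrow> real list" where
  "phi z = [1] @ map (\<lambda>i. z $ i) coords
     @ map (\<lambda>(i, j). if i = j then z $ i ^ 2 / 2 else z $ i * z $ j) qpairs"

definition upper :: "((real, 'n::{finite,linorder}) vec, 'n) vec \<Rightarrow> real list" where
  "upper H = map (\<lambda>(i, j). H $ i $ j) qpairs"

text \<open>p x p matrices represented as functions on indices 0..p-1.\<close>
definition is_inverse_mat :: "nat \<Rightarrow> (nat \<Rightarrow> nat \<Rightarrow> real) \<Rightarrow> (nat \<Rightarrow> nat \<Rightarrow> real) \<Rightarrow> bool" where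
  "is_inverse_mat p A B \<longleftrightarrow>
     (\<forall>i<p. \<forall>j<p. (\<Sum>k<p. A i k * B k j) = (if i = j then 1 else 0)) \<and>
     (\<forall>i<p. \<forall>j<p. (\<Sum>k<p. B i k * A k j) = (if i = j then 1 else 0))"

definition invertible_mat_p :: "nat \<Rightarrow> (nat \<Rightarrow> nat \<Rightarrow> real) \<Rightarrow> bool" where
  "invertible_mat_p p A \<longleftrightarrow> (\<exists>B. is_inverse_mat p A B)"

definition inv_mat_p :: "nat \<Rightarrow> (nat \<Rightarrow> nat \<Rightarrow> real) \<Rightarrow> (nat \<Rightarrow> nat \<Rightarrow> real)" where
  "inv_mat_p p A = (SOME B. is_inverse_mat p A B)"

definition norm_inf_p :: "nat \<Rightarrow> (nat \<Rightarrow> nat \<Rightarrow> real) \<Rightarrow> real" where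
  "norm_inf_p p A = Max ((\<lambda>i. \<Sum>j<p. \<bar>A i j\<bar>) ` {..<p})"

definition opnorm :: "real ^ 'n ^ 'n \<Rightarrow> real" where
  "opnorm A = onorm (\<lambda>v. A *v v)"

end

theory Submission
  imports Defs
begin

lemma cmp_deriv:
  fixes \<phi> \<psi> \<phi>' \<psi>' :: "real \<Rightarrow> real" and T :: real
  assumes "T \<ge> 0"
    and d1: "\<And>a. (\<phi> has_real_derivative \<phi>' a) (at a)"
    and d2: "\<And>a. (\<psi> has_real_derivative \<psi>' a) (at a)"
    and b: "\<And>a. 0 \<le> a \<Longrightarrow> a \<le> T \<Longrightarrow> \<bar>\<phi>' a\<bar> \<le> \<psi>' a"
  shows "\<bar>\<phi> T - \<phi> 0\<bar> \<le> \<psi> T - \<psi> 0"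
proof -
  have "(\<lambda>a. \<psi> a - \<phi> a) 0 \<le> (\<lambda>a. \<psi> a - \<phi> a) T"
    apply (rule DERIV_nonneg_imp_increasing_open[OF assms(1)])
    subgoal for a using b[of a] by (intro exI[of _ "\<psi>' a - \<phi>' a"]) (auto intro!: derivative_eq_intros d1 d2)
    by (intro continuous_at_imp_continuous_on ballI isCont_diff DERIV_isCont[OF d1] DERIV_isCont[OF d2])
  moreover have "(\<lambda>a. \<psi> a + \<phi> a) 0 \<le> (\<lambda>a. \<psi> a + \<phi> a) T"
    apply (rule DERIV_nonneg_imp_increasing_open[OF assms(1)])
    subgoal for a using b[of a] by (intro exI[of _ "\<psi>' a + \<phi>' a"]) (auto intro!: derivative_eq_intros d1 d2)
    by (intro continuous_at_imp_continuous_on ballI isCont_add DERIV_isCont[OF d1] DERIV_isCont[OF d2])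
  ultimately show ?thesis by auto
qed


lemma line_deriv:
  fixes Df :: "(real, 'n::finite) vec \<Rightarrow> (real, 'n) vec"
  assumes hess: "\<And>z. (Df has_derivative (\<lambda>h. Hf z *v h)) (at z)"
  shows "((\<lambda>t. V \<bullet> Df (a + t *\<^sub>R w)) has_real_derivative (V \<bullet> (Hf (a + t *\<^sub>R w) *v w))) (at t)"
proof -
  have l: "((\<lambda>t. a + t *\<^sub>R w) has_derivative (\<lambda>h. h *\<^sub>R w)) (at t)"
    by (auto intro!: derivative_eq_intros)
  have "((\<lambda>t. Df (a + t *\<^sub>R w)) has_derivative (\<lambda>h. Hf (a + t *\<^sub>R w) *v (h *\<^sub>R w))) (at t)"
    using diff_chain_at[OF l hess] by (simp add: o_def)
  then have "((\<lambda>t. V \<bullet> Df (a + t *\<^sub>R w)) has_derivative (\<lambda>h. V \<bullet> (Hf (a + t *\<^sub>R w) *v (h *\<^sub>R w)))) (at t)"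
    by (rule bounded_linear.has_derivative[OF bounded_linear_inner_right])
  then show ?thesis
    by (simp add: has_field_derivative_def matrix_vector_mult_scaleR algebra_simps) (erule has_derivative_eq_rhs, auto)
qed

lemma line_deriv_f:
  fixes f :: "(real, 'n::finite) vec \<Rightarrow> real"
  assumes grad: "\<And>z. (f has_derivative (\<lambda>h. Df z \<bullet> h)) (at z)"
  shows "((\<lambda>t. f (a + t *\<^sub>R w)) has_real_derivative (Df (a + t *\<^sub>R w) \<bullet> w)) (at t)"
proof -
  have l: "((\<lambda>t. a + t *\<^sub>R w) has_derivative (\<lambda>h. h *\<^sub>R w)) (at t)"
    by (auto intro!: derivative_eq_intros)
  have "((\<lambda>t. f (a + t *\<^sub>R w)) has_derivative (\<lambda>h. Df (a + t *\<^sub>R w) \<bullet> (h *\<^sub>R w))) (at t)"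
    using diff_chain_at[OF l grad] by (simp add: o_def)
  then show ?thesis
    by (simp add: has_field_derivative_def algebra_simps) (erule has_derivative_eq_rhs, auto)
qed


lemma opnorm_bound: "norm (A *v v) \<le> opnorm A * norm v"
  unfolding opnorm_def by (rule onorm[OF matrix_vector_mul_bounded_linear])

lemma opnorm_nonneg: "0 \<le> opnorm A"
  unfolding opnorm_def by (rule onorm_pos_le[OF matrix_vector_mul_bounded_linear])

lemma L_nonneg:
  fixes Hf :: "(real, 'n::finite) vec \<Rightarrow> ((real, 'n) vec, 'n) vec"
  assumes lip: "\<And>u v. opnorm (Hf u - Hf v) \<le> L * norm (u - v)"
  shows "0 \<le> L"
  using lip[of "axis undefined 1" 0] opnorm_nonneg[of "Hf (axis undefined 1) - Hf 0"]
  by simp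

lemma grad_taylor:
  fixes Df :: "(real, 'n::finite) vec \<Rightarrow> (real, 'n) vec"
  assumes hess: "\<And>z. (Df has_derivative (\<lambda>h. Hf z *v h)) (at z)"
    and lip: "\<And>u v. opnorm (Hf u - Hf v) \<le> L * norm (u - v)"
  shows "norm (Df (a + w) - Df a - Hf a *v w) \<le> L / 2 * norm w ^ 2"
proof -
  define V where "V = Df (a + w) - Df a - Hf a *v w"
  define \<phi> where "\<phi> t = V \<bullet> Df (a + t *\<^sub>R w) - t * (V \<bullet> (Hf a *v w))" for t
  have d1: "(\<phi> has_real_derivative (V \<bullet> (Hf (a + t *\<^sub>R w) *v w) - V \<bullet> (Hf a *v w))) (at t)" for t
    unfolding \<phi>_def by (auto intro!: derivative_eq_intros line_deriv[OF hess])
  have d2: "((\<lambda>t. norm V * L * norm w ^ 2 * t ^ 2 / 2) has_real_derivative norm V * L * norm w ^ 2 * t) (at t)" for t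
    by (auto intro!: derivative_eq_intros)
  have b: "\<bar>V \<bullet> (Hf (a + t *\<^sub>R w) *v w) - V \<bullet> (Hf a *v w)\<bar> \<le> norm V * L * norm w ^ 2 * t"
    if "0 \<le> t" for t
  proof -
    have "\<bar>V \<bullet> (Hf (a + t *\<^sub>R w) *v w) - V \<bullet> (Hf a *v w)\<bar> = \<bar>V \<bullet> ((Hf (a + t *\<^sub>R w) - Hf a) *v w)\<bar>"
      by (simp add: matrix_vector_mult_diff_rdistrib inner_diff_right)
    also have "\<dots> \<le> norm V * norm ((Hf (a + t *\<^sub>R w) - Hf a) *v w)"
      by (rule Cauchy_Schwarz_ineq2)
    also have "\<dots> \<le> norm V * (opnorm (Hf (a + t *\<^sub>R w) - Hf a) * norm w)"
      by (intro mult_left_mono opnorm_bound) auto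
    also have "\<dots> \<le> norm V * ((L * norm (t *\<^sub>R w)) * norm w)"
      using lip[of "a + t *\<^sub>R w" a] by (intro mult_left_mono mult_right_mono) auto
    also have "\<dots> = norm V * L * norm w ^ 2 * t" using that by (simp add: power2_eq_square)
    finally show ?thesis .
  qed
  have "\<bar>\<phi> 1 - \<phi> 0\<bar> \<le> norm V * L * norm w ^ 2 * 1 ^ 2 / 2 - norm V * L * norm w ^ 2 * 0 ^ 2 / 2"
    by (rule cmp_deriv[OF _ d1 d2]) (use b in auto)
  moreover have "\<phi> 1 - \<phi> 0 = V \<bullet> V"
    by (simp add: \<phi>_def V_def inner_diff_right)
  ultimately have "norm V ^ 2 \<le> norm V * (L / 2 * norm w ^ 2)"
    by (simp add: power2_norm_eq_inner)
  then show ?thesis unfolding V_def[symmetric] using L_nonneg[OF lip]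
    by (cases "norm V = 0") (auto simp: power2_eq_square)
qed


lemma f_taylor:
  fixes f :: "(real, 'n::finite) vec \<Rightarrow> real"
  assumes grad: "\<And>z. (f has_derivative (\<lambda>h. Df z \<bullet> h)) (at z)"
    and hess: "\<And>z. (Df has_derivative (\<lambda>h. Hf z *v h)) (at z)"
    and lip: "\<And>u v. opnorm (Hf u - Hf v) \<le> L * norm (u - v)"
  shows "\<bar>f (a + w) - f a - Df a \<bullet> w - 1/2 * (w \<bullet> (Hf a *v w))\<bar> \<le> L / 6 * norm w ^ 3"
proof -
  define \<phi> where "\<phi> t = f (a + t *\<^sub>R w) - t * (Df a \<bullet> w) - t ^ 2 / 2 * (w \<bullet> (Hf a *v w))" for t
  have d1: "(\<phi> has_real_derivative (Df (a + t *\<^sub>R w) \<bullet> w - Df a \<bullet> w - t * (w \<bullet> (Hf a *v w)))) (at t)" for t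
    unfolding \<phi>_def by (auto intro!: derivative_eq_intros line_deriv_f[OF grad])
  have d2: "((\<lambda>t. L / 6 * norm w ^ 3 * t ^ 3) has_real_derivative L / 2 * norm w ^ 3 * t ^ 2) (at t)" for t
    by (auto intro!: derivative_eq_intros)
  have b: "\<bar>Df (a + t *\<^sub>R w) \<bullet> w - Df a \<bullet> w - t * (w \<bullet> (Hf a *v w))\<bar> \<le> L / 2 * norm w ^ 3 * t ^ 2"
    if "0 \<le> t" for t
  proof -
    have "Df (a + t *\<^sub>R w) \<bullet> w - Df a \<bullet> w - t * (w \<bullet> (Hf a *v w))
        = w \<bullet> (Df (a + t *\<^sub>R w) - Df a - Hf a *v (t *\<^sub>R w))"
      by (simp add: inner_diff_right inner_commute matrix_vector_mult_scaleR)
    also have "\<bar>\<dots>\<bar> \<le> norm w * norm (Df (a + t *\<^sub>R w) - Df a - Hf a *v (t *\<^sub>R w))"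
      by (rule Cauchy_Schwarz_ineq2)
    also have "\<dots> \<le> norm w * (L / 2 * norm (t *\<^sub>R w) ^ 2)"
      by (intro mult_left_mono grad_taylor[OF hess lip]) auto
    also have "\<dots> = L / 2 * norm w ^ 3 * t ^ 2" using that by (simp add: power2_eq_square power3_eq_cube)
    finally show ?thesis .
  qed
  have "\<bar>\<phi> 1 - \<phi> 0\<bar> \<le> L / 6 * norm w ^ 3 * 1 ^ 3 - L / 6 * norm w ^ 3 * 0 ^ 3"
    by (rule cmp_deriv[OF _ d1 d2]) (use b in auto)
  moreover have "\<phi> 1 - \<phi> 0 = f (a + w) - f a - Df a \<bullet> w - 1/2 * (w \<bullet> (Hf a *v w))"
    by (simp add: \<phi>_def)
  ultimately show ?thesis by simp
qed

lemma sec_diff: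
  fixes f :: "(real, 'n::finite) vec \<Rightarrow> real"
  assumes grad: "\<And>z. (f has_derivative (\<lambda>h. Df z \<bullet> h)) (at z)"
    and hess: "\<And>z. (Df has_derivative (\<lambda>h. Hf z *v h)) (at z)"
    and lip: "\<And>u v. opnorm (Hf u - Hf v) \<le> L * norm (u - v)"
    and t: "0 \<le> t"
  shows "\<bar>f (a + t *\<^sub>R v + t *\<^sub>R u) - f (a + t *\<^sub>R u) - f (a + t *\<^sub>R v) + f a - t ^ 2 * (u \<bullet> (Hf a *v v))\<bar>
     \<le> norm u * (L / 2 * norm v ^ 2 + L * norm u * norm v) * t ^ 3"
proof -
  define K where "K = norm u * (L / 2 * norm v ^ 2 + L * norm u * norm v)"
  define \<phi> where "\<phi> b = f (a + t *\<^sub>R v + b *\<^sub>R u) - f (a + b *\<^sub>R u) - b * t * (u \<bullet> (Hf a *v v))" for b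
  have d1: "(\<phi> has_real_derivative (Df (a + t *\<^sub>R v + b *\<^sub>R u) \<bullet> u - Df (a + b *\<^sub>R u) \<bullet> u - t * (u \<bullet> (Hf a *v v)))) (at b)" for b
    unfolding \<phi>_def by (auto intro!: derivative_eq_intros line_deriv_f[OF grad])
  have d2: "((\<lambda>b. K * t ^ 2 * b) has_real_derivative K * t ^ 2) (at b)" for b
    by (auto intro!: derivative_eq_intros)
  have b: "\<bar>Df (a + t *\<^sub>R v + b *\<^sub>R u) \<bullet> u - Df (a + b *\<^sub>R u) \<bullet> u - t * (u \<bullet> (Hf a *v v))\<bar> \<le> K * t ^ 2"
    if "0 \<le> b" "b \<le> t" for b
  proof -
    have "Df (a + t *\<^sub>R v + b *\<^sub>R u) \<bullet> u - Df (a + b *\<^sub>R u) \<bullet> u - t * (u \<bullet> (Hf a *v v))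
        = u \<bullet> (Df ((a + b *\<^sub>R u) + t *\<^sub>R v) - Df (a + b *\<^sub>R u) - Hf (a + b *\<^sub>R u) *v (t *\<^sub>R v))
          + u \<bullet> ((Hf (a + b *\<^sub>R u) - Hf a) *v (t *\<^sub>R v))"
      by (simp add: inner_diff_right inner_commute matrix_vector_mult_scaleR
          matrix_vector_mult_diff_rdistrib add_ac) (simp add: algebra_simps)
    also have "\<bar>\<dots>\<bar> \<le> norm u * norm (Df ((a + b *\<^sub>R u) + t *\<^sub>R v) - Df (a + b *\<^sub>R u) - Hf (a + b *\<^sub>R u) *v (t *\<^sub>R v))
          + norm u * norm ((Hf (a + b *\<^sub>R u) - Hf a) *v (t *\<^sub>R v))"
      by (rule order_trans[OF abs_triangle_ineq add_mono[OF Cauchy_Schwarz_ineq2 Cauchy_Schwarz_ineq2]])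
    also have "\<dots> \<le> norm u * (L / 2 * norm (t *\<^sub>R v) ^ 2)
          + norm u * (opnorm (Hf (a + b *\<^sub>R u) - Hf a) * norm (t *\<^sub>R v))"
      by (intro add_mono mult_left_mono grad_taylor[OF hess lip] opnorm_bound) auto
    also have "\<dots> \<le> norm u * (L / 2 * norm (t *\<^sub>R v) ^ 2)
          + norm u * ((L * norm (b *\<^sub>R u)) * norm (t *\<^sub>R v))"
      using lip[of "a + b *\<^sub>R u" a] by (intro add_mono mult_left_mono mult_right_mono) auto
    also have "\<dots> = norm u * (L / 2 * norm v ^ 2 * t ^ 2 + L * norm u * norm v * (b * t))"
      using that by (simp add: power2_eq_square algebra_simps)
    also have "\<dots> \<le> norm u * (L / 2 * norm v ^ 2 * t ^ 2 + L * norm u * norm v * (t * t))"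
      using that L_nonneg[OF lip]
      by (intro mult_left_mono add_mono mult_left_mono mult_right_mono) auto
    also have "\<dots> = K * t ^ 2" by (simp add: K_def power2_eq_square algebra_simps)
    finally show ?thesis .
  qed
  have "\<bar>\<phi> t - \<phi> 0\<bar> \<le> K * t ^ 2 * t - K * t ^ 2 * 0"
    by (rule cmp_deriv[OF t d1 d2]) (use b in auto)
  then show ?thesis by (simp add: \<phi>_def K_def power2_eq_square power3_eq_cube algebra_simps)
qed

lemma axis_entry: "axis i (1::real) \<bullet> (A *v axis j 1) = A $ i $ j"
proof -
  have "axis i (1::real) \<bullet> (A *v axis j 1) = (A *v axis j 1) $ i"
    by (simp add: cart_eq_inner_axis inner_commute)
  also have "\<dots> = A $ i $ j"
    by (simp add: matrix_vector_mult_def axis_def mult.commute[of "A $ i $ _"] if_distrib sum.delta cong: if_cong)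
  finally show ?thesis .
qed


lemma hess_sym:
  fixes f :: "(real, 'n::finite) vec \<Rightarrow> real"
  assumes grad: "\<And>z. (f has_derivative (\<lambda>h. Df z \<bullet> h)) (at z)"
    and hess: "\<And>z. (Df has_derivative (\<lambda>h. Hf z *v h)) (at z)"
    and lip: "\<And>u v. opnorm (Hf u - Hf v) \<le> L * norm (u - v)"
  shows "Hf a $ i $ j = Hf a $ j $ i"
proof (rule ccontr)
  assume ne: "Hf a $ i $ j \<noteq> Hf a $ j $ i"
  define d where "d = \<bar>Hf a $ i $ j - Hf a $ j $ i\<bar>"
  define C where "C = (L / 2 + L) + (L / 2 + L)"
  have d: "d > 0" using ne by (simp add: d_def)
  have C: "C \<ge> 0" using L_nonneg[OF lip] by (simp add: C_def)
  define t where "t = d / (2 * (C + 1))"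
  have t: "t > 0" using d C by (simp add: t_def)
  let ?u = "axis i (1::real)" and ?v = "axis j (1::real)"
  have e1: "\<bar>f (a + t *\<^sub>R ?v + t *\<^sub>R ?u) - f (a + t *\<^sub>R ?u) - f (a + t *\<^sub>R ?v) + f a - t ^ 2 * Hf a $ i $ j\<bar>
     \<le> (L / 2 + L) * t ^ 3"
    using sec_diff[OF grad hess lip, of t a ?v ?u] t by (simp add: axis_entry)
  have e2: "\<bar>f (a + t *\<^sub>R ?u + t *\<^sub>R ?v) - f (a + t *\<^sub>R ?v) - f (a + t *\<^sub>R ?u) + f a - t ^ 2 * Hf a $ j $ i\<bar>
     \<le> (L / 2 + L) * t ^ 3"
    using sec_diff[OF grad hess lip, of t a ?u ?v] t by (simp add: axis_entry)
  have "a + t *\<^sub>R ?u + t *\<^sub>R ?v = a + t *\<^sub>R ?v + t *\<^sub>R ?u" by (simp add: add_ac)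
  define X where "X = f (a + t *\<^sub>R ?v + t *\<^sub>R ?u) - f (a + t *\<^sub>R ?u) - f (a + t *\<^sub>R ?v) + f a"
  have e1': "\<bar>X - t ^ 2 * Hf a $ i $ j\<bar> \<le> (L / 2 + L) * t ^ 3" using e1 by (simp add: X_def)
  have e2': "\<bar>X - t ^ 2 * Hf a $ j $ i\<bar> \<le> (L / 2 + L) * t ^ 3" using e2 \<open>a + t *\<^sub>R ?u + t *\<^sub>R ?v = _\<close>
    by (simp add: X_def algebra_simps)
  have "t ^ 2 * d = \<bar>(X - t ^ 2 * Hf a $ j $ i) - (X - t ^ 2 * Hf a $ i $ j)\<bar>"
    by (simp add: d_def abs_mult right_diff_distrib[symmetric])
  also have "\<dots> \<le> \<bar>X - t ^ 2 * Hf a $ j $ i\<bar> + \<bar>X - t ^ 2 * Hf a $ i $ j\<bar>"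
    by (rule abs_triangle_ineq4)
  also have "\<dots> \<le> C * t ^ 3" using e1' e2' by (simp add: C_def algebra_simps)
  finally have "t ^ 2 * d \<le> C * t ^ 3" .
  then have "d \<le> C * t" using t by (simp add: power2_eq_square power3_eq_cube mult_ac)
  also have "C * t < d" using d C by (simp add: t_def field_simps) (metis add_pos_nonneg mult_nonneg_nonneg less_imp_le mult_pos_pos zero_less_numeral add.commute)
  finally show False by simp
qed


lemma coords_props:
  "set (coords :: ('n::{finite,linorder}) list) = UNIV" "distinct (coords :: 'n list)"
  "length (coords :: 'n list) = CARD('n)"
  by (simp_all add: coords_def)

lemma qpairs_set: "set (qpairs :: (('n::{finite,linorder}) \<times> 'n) list) = {(i, j). i \<le> j}"
  by (auto simp: qpairs_def coords_props)

lemma qpairs_distinct: "distinct (qpairs :: (('n::{finite,linorder}) \<times> 'n) list)"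
proof -
  let ?L = "map (\<lambda>i. map (Pair i) (filter ((\<le>) i) (coords :: 'n list))) coords"
  have ne: "[] \<notin> set ?L"
  proof
    assume "[] \<in> set ?L"
    then obtain x :: 'n where "filter ((\<le>) x) coords = []" by auto
    then have "x \<notin> set (filter ((\<le>) x) coords)" by simp
    then show False by (simp add: coords_props)
  qed
  have inj: "inj_on (\<lambda>i. map (Pair i) (filter ((\<le>) i) (coords :: 'n list))) (set coords)"
  proof (rule inj_onI)
    fix i i' :: 'n
    assume "map (Pair i) (filter ((\<le>) i) coords) = map (Pair i') (filter ((\<le>) i') coords)"
    moreover have "(i, i) \<in> set (map (Pair i) (filter ((\<le>) i) coords))"
      by (simp add: coords_props)
    ultimately have "(i, i) \<in> set (map (Pair i') (filter ((\<le>) i') coords))"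
      by simp
    then show "i = i'" by auto
  qed
  have "distinct ?L"
    using inj by (simp add: distinct_map coords_props)
  then show ?thesis unfolding qpairs_def using ne
    by (auto simp: distinct_concat_iff coords_props removeAll_id distinct_map inj_on_def)
qed

lemma decomp:
  fixes h :: "('n::{finite,linorder}) \<times> 'n \<Rightarrow> 'a::comm_monoid_add"
  shows "sum h {(i, j). i \<le> j} = sum h {(i, j). i < j} + sum h {(i, j). i = j}"
    and "sum h UNIV = sum h {(i, j). i \<le> j} + sum h {(i, j). j < i}"
    and "sum h {(i, j). j < i} = sum (\<lambda>(i, j). h (j, i)) {(i, j). i < j}"
proof -
  have "{(i::'n, j). i \<le> j} = {(i, j). i < j} \<union> {(i, j). i = j}" by auto
  then show "sum h {(i, j). i \<le> j} = sum h {(i, j). i < j} + sum h {(i, j). i = j}"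
    by (simp add: sum.union_disjoint[symmetric]) (subst sum.union_disjoint, auto)
  have "(UNIV :: ('n \<times> 'n) set) = {(i, j). i \<le> j} \<union> {(i, j). j < i}" by auto
  moreover have "sum h ({(i, j). i \<le> j} \<union> {(i, j). j < i}) = sum h {(i, j). i \<le> j} + sum h {(i, j). j < i}"
    by (rule sum.union_disjoint) auto
  ultimately show "sum h UNIV = sum h {(i, j). i \<le> j} + sum h {(i, j). j < i}"
    by simp
  show "sum h {(i, j). j < i} = sum (\<lambda>(i, j). h (j, i)) {(i, j). i < j}"
    by (rule sum.reindex_bij_witness[where i = "\<lambda>(i, j). (j, i)" and j = "\<lambda>(i, j). (j, i)"]) auto
qed


lemma diag_card: "card {(i::'n::{finite,linorder}, j). i = j} = CARD('n)"
proof -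
  have "{(i::'n, j). i = j} = (\<lambda>i. (i, i)) ` UNIV" by auto
  moreover have "inj (\<lambda>i::'n. (i, i))" by (auto simp: inj_on_def)
  ultimately show ?thesis by (simp add: card_image)
qed

lemma qpairs_length: "2 * length (qpairs :: (('n::{finite,linorder}) \<times> 'n) list) = CARD('n) * CARD('n) + CARD('n)"
proof -
  have l: "length (qpairs :: ('n \<times> 'n) list) = card {(i::'n, j). i \<le> j}"
    using distinct_card[OF qpairs_distinct[where 'n='n]] by (simp add: qpairs_set)
  have a: "card {(i::'n, j). i \<le> j} = card {(i::'n, j). i < j} + CARD('n)"
    using decomp(1)[of "\<lambda>_::'n\<times>'n. 1::nat"] diag_card by simp
  have b: "CARD('n) * CARD('n) = card {(i::'n, j). i \<le> j} + card {(i::'n, j). j < i}"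
    using decomp(2)[of "\<lambda>_::'n\<times>'n. 1::nat"] card_cartesian_product[of "UNIV::'n set" "UNIV::'n set"] by simp
  have c: "card {(i::'n, j). j < i} = card {(i::'n, j). i < j}"
    using decomp(3)[of "\<lambda>_::'n\<times>'n. 1::nat"] by simp
  show ?thesis using a b c l by simp
qed

lemma quad_sum:
  fixes h :: "('n::{finite,linorder}) \<times> 'n \<Rightarrow> real"
  assumes sym: "\<And>i j. h (i, j) = h (j, i)"
  shows "(\<Sum>q\<in>{(i, j). i \<le> j}. if fst q = snd q then h q / 2 else h q) = 1/2 * sum h UNIV"
proof -
  let ?t = "\<lambda>q. if fst q = snd q then h q / 2 else h q"
  have "sum ?t {(i, j). i \<le> j} = sum ?t {(i, j). i < j} + sum ?t {(i, j). i = j}"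
    by (rule decomp(1))
  also have "sum ?t {(i, j). i < j} = sum h {(i, j). i < j}"
    by (rule sum.cong) auto
  also have "sum ?t {(i, j). i = j} = sum (\<lambda>q. h q / 2) {(i, j). i = j}"
    by (rule sum.cong) auto
  also have "\<dots> = sum h {(i, j). i = j} / 2"
    by (simp add: sum_divide_distrib)
  finally have L: "sum ?t {(i, j). i \<le> j} = sum h {(i, j). i < j} + sum h {(i, j). i = j} / 2" .
  have "sum h UNIV = sum h {(i, j). i < j} + sum h {(i, j). i = j} + sum h {(i, j). j < i}"
    using decomp(1,2)[of h] by simp
  also have "sum h {(i, j). j < i} = sum h {(i, j). i < j}"
    using decomp(3)[of h] sym by (simp add: case_prod_unfold)
  finally show ?thesis using L by simp
qed


definition coefl :: "real \<Rightarrow> real \<Rightarrow> (real, 'n::{finite,linorder}) vec \<Rightarrow> ((real, 'n) vec, 'n) vec \<Rightarrow> real list" where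
  "coefl \<Delta> a b M = [a] @ map (\<lambda>j. \<Delta> * b $ j) coords @ map (\<lambda>h. \<Delta>\<^sup>2 * h) (upper M)"

lemma length_phi: "length (phi (z :: (real, 'n::{finite,linorder}) vec)) = 1 + CARD('n) + length (qpairs :: ('n \<times> 'n) list)"
  by (simp add: phi_def coords_props)

lemma length_coefl: "length (coefl \<Delta> a b (M :: ((real, 'n::{finite,linorder}) vec, 'n) vec)) = 1 + CARD('n) + length (qpairs :: ('n \<times> 'n) list)"
  by (simp add: coefl_def upper_def coords_props)

lemma dot_zip:
  fixes xs ys :: "real list"
  assumes "length xs = length ys"
  shows "(\<Sum>k<length xs. xs ! k * ys ! k) = sum_list (map2 (*) xs ys)"
  using assms by (simp add: sum_list_sum_nth atLeast0LessThan)

lemma dot_append: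
  fixes xs1 xs2 ys1 ys2 :: "real list"
  assumes "length xs1 = length ys1" "length xs2 = length ys2"
  shows "(\<Sum>k<length (xs1 @ xs2). (xs1 @ xs2) ! k * (ys1 @ ys2) ! k)
    = (\<Sum>k<length xs1. xs1 ! k * ys1 ! k) + (\<Sum>k<length xs2. xs2 ! k * ys2 ! k)"
proof -
  have l: "length (xs1 @ xs2) = length (ys1 @ ys2)" using assms by simp
  show ?thesis
    unfolding dot_zip[OF assms(1)] dot_zip[OF assms(2)] dot_zip[OF l]
    using assms by simp
qed

lemma dot_map:
  "(\<Sum>k<length l. map f l ! k * map g l ! k) = sum_list (map (\<lambda>a. f a * (g a :: real)) l)"
  by (simp add: sum_list_sum_nth atLeast0LessThan)


lemma dot_map':
  "(\<Sum>k<length l. f (l ! k) * (g (l ! k) :: real)) = sum_list (map (\<lambda>a. f a * g a) l)"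
  by (simp add: sum_list_sum_nth atLeast0LessThan)

lemma phi_dot:
  fixes z b :: "(real, 'n::{finite,linorder}) vec" and M :: "((real, 'n) vec, 'n) vec"
  assumes sym: "transpose M = M"
  shows "(\<Sum>k<length (phi z). phi z ! k * coefl \<Delta> a b M ! k)
     = a + b \<bullet> (\<Delta> *\<^sub>R z) + 1/2 * ((\<Delta> *\<^sub>R z) \<bullet> (M *v (\<Delta> *\<^sub>R z)))"
proof -
  have Msym: "M $ i $ j = M $ j $ i" for i j
    using arg_cong[OF sym, of "\<lambda>A. A $ i $ j"] by (simp add: transpose_def)
  let ?qf = "\<lambda>(i, j). if i = j then z $ i ^ 2 / 2 else z $ i * z $ j"
  let ?mf = "\<lambda>q. \<Delta>\<^sup>2 * (case q of (i, j) \<Rightarrow> M $ i $ j)"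
  have pz: "phi z = [1] @ (map (\<lambda>i. z $ i) coords @ map ?qf qpairs)"
    by (simp add: phi_def)
  have cz: "coefl \<Delta> a b M = [a] @ (map (\<lambda>j. \<Delta> * b $ j) coords @ map ?mf qpairs)"
    by (simp add: coefl_def upper_def)
  have "(\<Sum>k<length (phi z). phi z ! k * coefl \<Delta> a b M ! k)
      = a + sum_list (map (\<lambda>j. z $ j * (\<Delta> * b $ j)) coords) + sum_list (map (\<lambda>q. ?qf q * ?mf q) qpairs)"
    unfolding pz cz
    by (subst dot_append, simp, simp, subst dot_append, simp, simp) (simp add: sum_list_sum_nth atLeast0LessThan)
  also have "sum_list (map (\<lambda>j. z $ j * (\<Delta> * b $ j)) coords) = b \<bullet> (\<Delta> *\<^sub>R z)"
    by (simp add: sum_list_distinct_conv_sum_set coords_props inner_vec_def mult_ac)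
  also have "sum_list (map (\<lambda>q. ?qf q * ?mf q) qpairs)
      = (\<Sum>q\<in>{(i, j). i \<le> j}. if fst q = snd q then (\<lambda>(i,j). (\<Delta> * z $ i) * M $ i $ j * (\<Delta> * z $ j)) q / 2
           else (\<lambda>(i,j). (\<Delta> * z $ i) * M $ i $ j * (\<Delta> * z $ j)) q)"
    by (simp add: sum_list_distinct_conv_sum_set qpairs_distinct qpairs_set[symmetric])
       (rule sum.cong, auto simp: power2_eq_square mult_ac)
  also have "\<dots> = 1/2 * sum (\<lambda>(i,j). (\<Delta> * z $ i) * M $ i $ j * (\<Delta> * z $ j)) UNIV"
    by (rule quad_sum) (simp add: Msym mult_ac)
  also have "sum (\<lambda>(i,j). (\<Delta> * z $ i) * M $ i $ j * (\<Delta> * z $ j)) UNIV = (\<Delta> *\<^sub>R z) \<bullet> (M *v (\<Delta> *\<^sub>R z))"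
    by (simp add: inner_vec_def matrix_vector_mult_def sum_distrib_left UNIV_Times_UNIV[symmetric] sum.cartesian_product[symmetric] del: UNIV_Times_UNIV)
       (simp add: mult_ac)
  finally show ?thesis .
qed


lemma coef_extract:
  fixes b :: "(real, 'n::{finite,linorder}) vec" and M :: "((real, 'n) vec, 'n) vec"
  assumes E: "\<And>k. k < length (coefl \<Delta> a b M) \<Longrightarrow> \<bar>coefl \<Delta> a b M ! k\<bar> \<le> E"
  shows "\<bar>a\<bar> \<le> E" and "\<bar>\<Delta> * b $ j\<bar> \<le> E" and "i \<le> j \<Longrightarrow> \<bar>\<Delta>\<^sup>2 * M $ i $ j\<bar> \<le> E"
proof -
  show "\<bar>a\<bar> \<le> E" using E[of 0] by (simp add: coefl_def)
  obtain k where k: "k < length (coords :: 'n list)" "coords ! k = j"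
    using coords_props(1)[where 'n='n] by (metis UNIV_I in_set_conv_nth)
  have "coefl \<Delta> a b M ! (1 + k) = \<Delta> * b $ j"
    using k by (simp add: coefl_def nth_append)
  moreover have "1 + k < length (coefl \<Delta> a b M)"
    using k by (simp add: length_coefl coords_props)
  ultimately show "\<bar>\<Delta> * b $ j\<bar> \<le> E" using E by metis
  assume ij: "i \<le> j"
  then have "(i, j) \<in> set (qpairs :: ('n \<times> 'n) list)" by (simp add: qpairs_set)
  then obtain q where q: "q < length (qpairs :: ('n \<times> 'n) list)" "qpairs ! q = (i, j)"
    by (metis in_set_conv_nth)
  have "coefl \<Delta> a b M ! (1 + CARD('n) + q) = \<Delta>\<^sup>2 * M $ i $ j"
    using q by (simp add: coefl_def nth_append coords_props upper_def)
  moreover have "1 + CARD('n) + q < length (coefl \<Delta> a b M)"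
    using q by (simp add: length_coefl)
  ultimately show "\<bar>\<Delta>\<^sup>2 * M $ i $ j\<bar> \<le> E" using E by metis
qed

lemma inv_bound:
  assumes inv: "is_inverse_mat p Q B"
    and r: "\<And>i. i < p \<Longrightarrow> (\<Sum>k<p. Q i k * e k) = r i"
    and R: "\<And>i. i < p \<Longrightarrow> \<bar>r i\<bar> \<le> R"
    and k: "k < p"
  shows "\<bar>e k\<bar> \<le> norm_inf_p p B * R"
proof -
  have BQ: "\<And>i j. i < p \<Longrightarrow> j < p \<Longrightarrow> (\<Sum>l<p. B i l * Q l j) = (if i = j then 1 else 0)"
    using inv by (simp add: is_inverse_mat_def)
  have "e k = (\<Sum>m<p. (if k = m then 1 else 0) * e m)"
  proof -
    have "(\<Sum>m<p. (if k = m then 1 else 0) * e m) = (\<Sum>m<p. if k = m then e m else 0)"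
      by (rule sum.cong) auto
    also have "\<dots> = e k" using k by (simp add: sum.delta)
    finally show ?thesis by simp
  qed
  also have "\<dots> = (\<Sum>m<p. (\<Sum>l<p. B k l * Q l m) * e m)"
    using k BQ by (intro sum.cong) auto
  also have "\<dots> = (\<Sum>l<p. B k l * (\<Sum>m<p. Q l m * e m))"
    by (simp add: sum_distrib_left sum_distrib_right mult_ac) (rule sum.swap)
  also have "\<dots> = (\<Sum>l<p. B k l * r l)"
    using r by (intro sum.cong) auto
  finally have ek: "e k = (\<Sum>l<p. B k l * r l)" .
  have "\<bar>e k\<bar> \<le> (\<Sum>l<p. \<bar>B k l\<bar> * \<bar>r l\<bar>)"
    unfolding ek by (rule order_trans[OF sum_abs]) (simp add: abs_mult)
  also have "\<dots> \<le> (\<Sum>l<p. \<bar>B k l\<bar> * R)"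
    using R by (intro sum_mono mult_left_mono) auto
  also have "\<dots> = (\<Sum>l<p. \<bar>B k l\<bar>) * R" by (simp add: sum_distrib_right)
  also have "\<dots> \<le> norm_inf_p p B * R"
  proof (rule mult_right_mono)
    show "(\<Sum>l<p. \<bar>B k l\<bar>) \<le> norm_inf_p p B"
      unfolding norm_inf_p_def using k by (intro Max_ge) auto
    show "0 \<le> R" using R[OF k] by linarith
  qed
  finally show ?thesis .
qed

lemma norm_inf_nonneg: "0 < p \<Longrightarrow> 0 \<le> norm_inf_p p B"
  unfolding norm_inf_p_def
  by (rule order_trans[OF _ Max_ge[of _ "\<Sum>j<p. \<bar>B 0 j\<bar>"]]) (auto intro: sum_nonneg)

lemma vec_norm_bound:
  fixes v :: "(real, 'n::finite) vec"
  assumes "\<And>i. \<bar>v $ i\<bar> \<le> b"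
  shows "norm v \<le> sqrt (real CARD('n)) * b"
proof -
  have b: "0 \<le> b" using assms[of undefined] by linarith
  have "(\<Sum>i\<in>UNIV. (v $ i)\<^sup>2) \<le> (\<Sum>i\<in>(UNIV::'n set). b\<^sup>2)"
    using assms by (intro sum_mono) (metis abs_le_square_iff abs_of_nonneg b abs_abs power2_abs)
  then have "norm v \<le> sqrt (real CARD('n) * b\<^sup>2)"
    by (simp add: norm_vec_def L2_set_def)
  also have "\<dots> = sqrt (real CARD('n)) * b" using b by (simp add: real_sqrt_mult)
  finally show ?thesis .
qed

lemma l1_bound:
  fixes v :: "(real, 'n::finite) vec"
  shows "(\<Sum>j\<in>UNIV. \<bar>v $ j\<bar>) \<le> sqrt (real CARD('n)) * norm v"
proof -
  have "(\<Sum>j\<in>UNIV. \<bar>v $ j\<bar>) = (\<chi> j. 1) \<bullet> (\<chi> j. \<bar>v $ j\<bar>)"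
    by (simp add: inner_vec_def)
  also have "\<dots> \<le> norm ((\<chi> j. 1) :: (real, 'n) vec) * norm ((\<chi> j. \<bar>v $ j\<bar>) :: (real, 'n) vec)"
    by (rule norm_cauchy_schwarz)
  also have "norm ((\<chi> j. 1) :: (real, 'n) vec) = sqrt (real CARD('n))"
    by (simp add: norm_vec_def L2_set_def)
  also have "norm ((\<chi> j. \<bar>v $ j\<bar>) :: (real, 'n) vec) = norm v"
    by (simp add: norm_vec_def L2_set_def)
  finally show ?thesis .
qed

lemma mat_norm_bound:
  fixes D :: "((real, 'n::finite) vec, 'n) vec"
  assumes "\<And>i j. \<bar>D $ i $ j\<bar> \<le> b"
  shows "norm (D *v v) \<le> real CARD('n) * b * norm v"
proof -
  have b: "0 \<le> b" using assms[of undefined undefined] by linarith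
  have "\<bar>(D *v v) $ i\<bar> \<le> b * (sqrt (real CARD('n)) * norm v)" for i
  proof -
    have "\<bar>(D *v v) $ i\<bar> \<le> (\<Sum>j\<in>UNIV. \<bar>D $ i $ j\<bar> * \<bar>v $ j\<bar>)"
      by (simp add: matrix_vector_mult_def abs_mult[symmetric] sum_abs)
    also have "\<dots> \<le> (\<Sum>j\<in>UNIV. b * \<bar>v $ j\<bar>)"
      using assms by (intro sum_mono mult_right_mono) auto
    also have "\<dots> = b * (\<Sum>j\<in>UNIV. \<bar>v $ j\<bar>)" by (simp add: sum_distrib_left)
    also have "\<dots> \<le> b * (sqrt (real CARD('n)) * norm v)"
      using b l1_bound by (intro mult_left_mono) auto
    finally show ?thesis .
  qed
  then have "norm (D *v v) \<le> sqrt (real CARD('n)) * (b * (sqrt (real CARD('n)) * norm v))"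
    by (rule vec_norm_bound)
  also have "\<dots> = real CARD('n) * b * norm v" by simp
  finally show ?thesis .
qed


lemma ineq1:
  fixes X m q :: real
  assumes "0 \<le> X" "0 \<le> m"
  shows "X + q * X + 1/2 * (m * X) \<le> (m + q + 3/2) * X"
proof -
  have "(m + q + 3/2) * X - (X + q * X + 1/2 * (m * X)) = (m/2 + 1/2) * X" by (simp add: algebra_simps)
  moreover have "0 \<le> (m/2 + 1/2) * X" using assms by simp
  ultimately show ?thesis by linarith
qed

lemma ineq2:
  fixes X m q :: real
  assumes "0 \<le> X" "0 \<le> m" "0 \<le> q"
  shows "q * X + m * X \<le> 34 * (m + q + 3/2) * X"
proof -
  have "34 * (m + q + 3/2) * X - (q * X + m * X) = (33 * m + 33 * q + 51) * X" by (simp add: algebra_simps)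
  moreover have "0 \<le> (33 * m + 33 * q + 51) * X" using assms by simp
  ultimately show ?thesis by linarith
qed

lemma ineq3:
  fixes X m q :: real
  assumes "0 \<le> X" "0 \<le> m" "0 \<le> q"
  shows "m * X \<le> 24 * (m + q + 3/2) * X"
proof -
  have "24 * (m + q + 3/2) * X - m * X = (23 * m + 24 * q + 36) * X" by (simp add: algebra_simps)
  moreover have "0 \<le> (23 * m + 24 * q + 36) * X" using assms by simp
  ultimately show ?thesis by linarith
qed

theorem theorem5p5:
  fixes f :: "(real, 'n::{finite,linorder}) vec \<Rightarrow> real"
    and Df :: "(real, 'n) vec \<Rightarrow> (real, 'n) vec"
    and Hf :: "(real, 'n) vec \<Rightarrow> ((real, 'n) vec, 'n) vec"
    and L :: real
    and x :: "(real, 'n) vec" and \<Delta> \<beta> :: real and p :: nat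
    and y :: "nat \<Rightarrow> (real, 'n) vec"
    and c :: real and g :: "(real, 'n) vec" and H :: "((real, 'n) vec, 'n) vec"
  assumes bdd_below: "\<exists>b. \<forall>z. b \<le> f z"
    and grad: "\<And>z. (f has_derivative (\<lambda>h. Df z \<bullet> h)) (at z)"
    and hess: "\<And>z. (Df has_derivative (\<lambda>h. Hf z *v h)) (at z)"
    and hess_cont: "continuous_on UNIV Hf"
    and hess_lip: "\<And>u v. opnorm (Hf u - Hf v) \<le> L * norm (u - v)"
    and Delta_pos: "\<Delta> > 0"
    and p_def: "p = (CARD('n) + 1) * (CARD('n) + 2) div 2"
    and beta_pos: "\<beta> > 0"
    and y_close: "\<And>i. i < p \<Longrightarrow> norm (y i - x) \<le> \<beta> * \<Delta>"
    and Q_inv: "invertible_mat_p p (\<lambda>i k. phi ((1 / \<Delta>) *\<^sub>R (y i - x)) ! k)"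
    and H_sym: "transpose H = H"
    and interp: "\<And>i. i < p \<Longrightarrow>
        (\<Sum>k<p. phi ((1 / \<Delta>) *\<^sub>R (y i - x)) ! k *
           (([c] @ map (\<lambda>j. \<Delta> * g $ j) coords @ map (\<lambda>h. \<Delta>\<^sup>2 * h) (upper H)) ! k))
        = f (y i)"
  shows "let m = (\<lambda>z. c + g \<bullet> (z - x) + (1/2) * ((z - x) \<bullet> (H *v (z - x))));
             A = L * (real CARD('n) + sqrt (real CARD('n)) + 3/2) * \<beta> ^ 3
                   * norm_inf_p p (inv_mat_p p (\<lambda>i k. phi ((1 / \<Delta>) *\<^sub>R (y i - x)) ! k));
             kmf = A / 6 + L / 6;
             kmg = 17 / 3 * A + L / 2;
             kmh = 4 * A + L
         in \<forall>z \<in> cball x \<Delta>.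
              \<bar>m z - f z\<bar> \<le> kmf * \<Delta> ^ 3 \<and>
              norm ((g + H *v (z - x)) - Df z) \<le> kmg * \<Delta> ^ 2 \<and>
              opnorm (H - Hf z) \<le> kmh * \<Delta>"
  proof -
  let ?n = "CARD('n)"
  define Q where "Q = (\<lambda>i k. phi ((1 / \<Delta>) *\<^sub>R (y i - x)) ! k)"
  define N where "N = norm_inf_p p (inv_mat_p p Q)"
  define Hx where "Hx = Hf x"
  have L0: "0 \<le> L" by (rule L_nonneg[OF hess_lip])
  have Hx_sym: "transpose Hx = Hx"
    by (simp add: transpose_def vec_eq_iff Hx_def hess_sym[OF grad hess hess_lip])
  have HHx_sym: "transpose (H - Hx) = H - Hx"
    using Hx_sym H_sym by (simp add: transpose_def vec_eq_iff)
  have lq: "2 * length (qpairs :: ('n \<times> 'n) list) = ?n * ?n + ?n" by (rule qpairs_length)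
  have p_eq: "p = 1 + ?n + length (qpairs :: ('n \<times> 'n) list)"
  proof -
    have "(?n + 1) * (?n + 2) = 2 * (1 + ?n + length (qpairs :: ('n \<times> 'n) list))"
      using lq by (simp add: algebra_simps)
    then show ?thesis unfolding p_def by simp
  qed
  have plen: "length (phi (z :: (real, 'n) vec)) = p" for z by (simp add: length_phi p_eq)
  have p_pos: "0 < p" using p_eq by simp
  have inv: "is_inverse_mat p Q (inv_mat_p p Q)"
    using Q_inv unfolding invertible_mat_p_def inv_mat_p_def Q_def by (rule someI_ex)
  define e where "e = coefl \<Delta> (c - f x) (g - Df x) (H - Hx)"
  have elen: "length e = p" by (simp add: e_def length_coefl p_eq)
  define r where "r i = f (y i) - f x - Df x \<bullet> (y i - x) - 1/2 * ((y i - x) \<bullet> (Hx *v (y i - x)))" for i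
  have sc: "\<Delta> *\<^sub>R ((1 / \<Delta>) *\<^sub>R w) = w" for w :: "(real, 'n) vec"
    using Delta_pos by simp
  have Qe: "(\<Sum>k<p. Q i k * e ! k) = r i" if i: "i < p" for i
  proof -
    let ?s = "y i - x"
    have fy: "f (y i) = c + g \<bullet> ?s + 1/2 * (?s \<bullet> (H *v ?s))"
      using interp[OF i] phi_dot[OF H_sym, of "(1 / \<Delta>) *\<^sub>R (y i - x)" \<Delta> c g, unfolded sc plen coefl_def]
      by simp
    have "(\<Sum>k<p. Q i k * e ! k) = (c - f x) + (g - Df x) \<bullet> ?s + 1/2 * (?s \<bullet> ((H - Hx) *v ?s))"
      using phi_dot[OF HHx_sym, of "(1 / \<Delta>) *\<^sub>R (y i - x)" \<Delta> "c - f x" "g - Df x", unfolded sc plen]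
      by (simp add: Q_def e_def)
    also have "\<dots> = r i" unfolding r_def fy
      by (simp add: inner_diff_left inner_diff_right matrix_vector_mult_diff_rdistrib algebra_simps)
    finally show ?thesis .
  qed
  have rb: "\<bar>r i\<bar> \<le> L / 6 * (\<beta> * \<Delta>) ^ 3" if i: "i < p" for i
  proof -
    have "\<bar>r i\<bar> \<le> L / 6 * norm (y i - x) ^ 3"
      using f_taylor[OF grad hess hess_lip, of x "y i - x"] by (simp add: r_def Hx_def)
    also have "\<dots> \<le> L / 6 * (\<beta> * \<Delta>) ^ 3"
      using y_close[OF i] L0 by (intro mult_left_mono power_mono) auto
    finally show ?thesis .
  qed
  define \<epsilon> where "\<epsilon> = N * L * \<beta> ^ 3 / 6"
  have N0: "0 \<le> N" unfolding N_def using p_pos by (rule norm_inf_nonneg)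
  have eps0: "0 \<le> \<epsilon>" using N0 L0 beta_pos by (simp add: \<epsilon>_def)
  have eb: "\<bar>e ! k\<bar> \<le> \<epsilon> * \<Delta> ^ 3" if k: "k < length e" for k
  proof -
    have "\<bar>e ! k\<bar> \<le> N * (L / 6 * (\<beta> * \<Delta>) ^ 3)"
      unfolding N_def by (rule inv_bound[OF inv Qe rb]) (use k elen in auto)
    also have "\<dots> = \<epsilon> * \<Delta> ^ 3" by (simp add: \<epsilon>_def power_mult_distrib)
    finally show ?thesis .
  qed
  note ex = coef_extract[of \<Delta> "c - f x" "g - Df x" "H - Hx" "\<epsilon> * \<Delta> ^ 3", folded e_def, OF eb]
  have cb: "\<bar>c - f x\<bar> \<le> \<epsilon> * \<Delta> ^ 3" by (rule ex(1))
  have db: "\<bar>(g - Df x) $ j\<bar> \<le> \<epsilon> * \<Delta> ^ 2" for j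
  proof -
    have "\<Delta> * \<bar>(g - Df x) $ j\<bar> \<le> \<Delta> * (\<epsilon> * \<Delta> ^ 2)"
      using ex(2)[of j] Delta_pos by (simp add: abs_mult power3_eq_cube power2_eq_square mult_ac)
    then show ?thesis using Delta_pos by simp
  qed
  have Db: "\<bar>(H - Hx) $ i $ j\<bar> \<le> \<epsilon> * \<Delta>" for i j
  proof -
    have Dsym: "(H - Hx) $ i $ j = (H - Hx) $ j $ i"
      using arg_cong[OF HHx_sym, of "\<lambda>A. A $ i $ j"] by (simp add: transpose_def)
    have "\<bar>\<Delta>\<^sup>2 * (H - Hx) $ i $ j\<bar> \<le> \<epsilon> * \<Delta> ^ 3"
      using ex(3)[of i j] ex(3)[of j i] Dsym by (cases "i \<le> j") auto
    then have "\<Delta>\<^sup>2 * \<bar>(H - Hx) $ i $ j\<bar> \<le> \<Delta>\<^sup>2 * (\<epsilon> * \<Delta>)"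
      by (simp add: abs_mult power3_eq_cube power2_eq_square mult_ac)
    then show ?thesis using Delta_pos by simp
  qed
  have nd: "norm (g - Df x) \<le> sqrt ?n * (\<epsilon> * \<Delta> ^ 2)" by (rule vec_norm_bound[OF db])
  have nD: "norm ((H - Hx) *v v) \<le> ?n * (\<epsilon> * \<Delta>) * norm v" for v by (rule mat_norm_bound[OF Db])
  define A where "A = L * (real CARD('n) + sqrt (real CARD('n)) + 3/2) * \<beta> ^ 3 * N"
  have A_eq: "A = 6 * \<epsilon> * (real ?n + sqrt ?n + 3/2)" by (simp add: A_def \<epsilon>_def)
  have sq0: "0 \<le> sqrt (real ?n)" by simp
  have main: "\<bar>(c + g \<bullet> (z - x) + (1/2) * ((z - x) \<bullet> (H *v (z - x)))) - f z\<bar> \<le> (A / 6 + L / 6) * \<Delta> ^ 3 \<and>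
      norm ((g + H *v (z - x)) - Df z) \<le> (17 / 3 * A + L / 2) * \<Delta> ^ 2 \<and>
      opnorm (H - Hf z) \<le> (4 * A + L) * \<Delta>" if z: "z \<in> cball x \<Delta>" for z
  proof -
    define s where "s = z - x"
    have zs: "z = x + s" by (simp add: s_def)
    have ns: "norm s \<le> \<Delta>" using z by (simp add: s_def dist_norm norm_minus_commute)
    have s0: "0 \<le> norm s" by simp
    define T where "T = f z - f x - Df x \<bullet> s - 1/2 * (s \<bullet> (Hx *v s))"
    have Tb: "\<bar>T\<bar> \<le> L / 6 * \<Delta> ^ 3"
    proof -
      have "\<bar>T\<bar> \<le> L / 6 * norm s ^ 3"
        using f_taylor[OF grad hess hess_lip, of x s] by (simp add: T_def Hx_def zs)
      also have "\<dots> \<le> L / 6 * \<Delta> ^ 3" using ns L0 by (intro mult_left_mono power_mono) auto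
      finally show ?thesis .
    qed
    have b1: "\<bar>(g - Df x) \<bullet> s\<bar> \<le> sqrt ?n * (\<epsilon> * \<Delta> ^ 3)"
    proof -
      have "\<bar>(g - Df x) \<bullet> s\<bar> \<le> norm (g - Df x) * norm s" by (rule Cauchy_Schwarz_ineq2)
      also have "\<dots> \<le> (sqrt ?n * (\<epsilon> * \<Delta> ^ 2)) * \<Delta>"
        using nd ns eps0 by (intro mult_mono) auto
      finally show ?thesis by (simp add: power2_eq_square power3_eq_cube mult_ac)
    qed
    have b2: "\<bar>s \<bullet> ((H - Hx) *v s)\<bar> \<le> ?n * (\<epsilon> * \<Delta> ^ 3)"
    proof -
      have "\<bar>s \<bullet> ((H - Hx) *v s)\<bar> \<le> norm s * norm ((H - Hx) *v s)" by (rule Cauchy_Schwarz_ineq2)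
      also have "\<dots> \<le> \<Delta> * (?n * (\<epsilon> * \<Delta>) * \<Delta>)"
        using nD[of s] ns eps0 Delta_pos by (intro mult_mono order_trans[OF nD[of s]] mult_left_mono) auto
      finally show ?thesis by (simp add: power2_eq_square power3_eq_cube mult_ac)
    qed
    have eqa: "(c + g \<bullet> s + (1/2) * (s \<bullet> (H *v s))) - f z
        = (c - f x) + (g - Df x) \<bullet> s + 1/2 * (s \<bullet> ((H - Hx) *v s)) - T"
      by (simp add: T_def inner_diff_left inner_diff_right matrix_vector_mult_diff_rdistrib algebra_simps)
    have "\<bar>(c + g \<bullet> s + (1/2) * (s \<bullet> (H *v s))) - f z\<bar>
       \<le> \<epsilon> * \<Delta> ^ 3 + sqrt ?n * (\<epsilon> * \<Delta> ^ 3) + 1/2 * (?n * (\<epsilon> * \<Delta> ^ 3)) + L / 6 * \<Delta> ^ 3"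
      unfolding eqa using cb b1 b2 Tb by linarith
    also have "\<dots> \<le> (A / 6 + L / 6) * \<Delta> ^ 3"
    proof -
      have X: "0 \<le> \<epsilon> * \<Delta> ^ 3" using eps0 Delta_pos by simp
      have "\<epsilon> * \<Delta> ^ 3 + sqrt ?n * (\<epsilon> * \<Delta> ^ 3) + 1/2 * (?n * (\<epsilon> * \<Delta> ^ 3))
          \<le> (real ?n + sqrt ?n + 3/2) * (\<epsilon> * \<Delta> ^ 3)"
        using ineq1[OF X, of "real ?n" "sqrt ?n"] by simp
      then show ?thesis by (simp add: A_eq algebra_simps)
    qed
    finally have r1: "\<bar>(c + g \<bullet> (z - x) + (1/2) * ((z - x) \<bullet> (H *v (z - x)))) - f z\<bar> \<le> (A / 6 + L / 6) * \<Delta> ^ 3"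
      by (simp add: s_def)
    define G where "G = Df z - Df x - Hx *v s"
    have Gb: "norm G \<le> L / 2 * \<Delta> ^ 2"
    proof -
      have "norm G \<le> L / 2 * norm s ^ 2"
        using grad_taylor[OF hess hess_lip, of x s] by (simp add: G_def Hx_def zs)
      also have "\<dots> \<le> L / 2 * \<Delta> ^ 2" using ns L0 by (intro mult_left_mono power_mono) auto
      finally show ?thesis .
    qed
    have eqb: "(g + H *v s) - Df z = (g - Df x) + (H - Hx) *v s - G"
      by (simp add: G_def matrix_vector_mult_diff_rdistrib algebra_simps)
    have nDs: "norm ((H - Hx) *v s) \<le> ?n * (\<epsilon> * \<Delta> ^ 2)"
    proof -
      have "norm ((H - Hx) *v s) \<le> ?n * (\<epsilon> * \<Delta>) * \<Delta>"
        by (rule order_trans[OF nD[of s]]) (intro mult_left_mono, use ns eps0 Delta_pos in auto)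
      then show ?thesis by (simp add: power2_eq_square mult_ac)
    qed
    have "norm ((g + H *v s) - Df z) \<le> norm (g - Df x) + norm ((H - Hx) *v s) + norm G"
      unfolding eqb by (rule order_trans[OF norm_triangle_ineq4]) (simp add: norm_triangle_ineq)
    also have "\<dots> \<le> sqrt ?n * (\<epsilon> * \<Delta> ^ 2) + ?n * (\<epsilon> * \<Delta> ^ 2) + L / 2 * \<Delta> ^ 2"
      using nd nDs Gb by linarith
    also have "\<dots> \<le> (17 / 3 * A + L / 2) * \<Delta> ^ 2"
    proof -
      have Y: "0 \<le> \<epsilon> * \<Delta> ^ 2" using eps0 by simp
      have "sqrt ?n * (\<epsilon> * \<Delta> ^ 2) + ?n * (\<epsilon> * \<Delta> ^ 2) \<le> 34 * (real ?n + sqrt ?n + 3/2) * (\<epsilon> * \<Delta> ^ 2)"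
        using ineq2[OF Y, of "real ?n" "sqrt ?n"] sq0 by simp
      then show ?thesis by (simp add: A_eq algebra_simps)
    qed
    finally have r2: "norm ((g + H *v (z - x)) - Df z) \<le> (17 / 3 * A + L / 2) * \<Delta> ^ 2"
      by (simp add: s_def)
    have r3: "opnorm (H - Hf z) \<le> (4 * A + L) * \<Delta>"
      unfolding opnorm_def
    proof (rule onorm_le)
      fix v :: "(real, 'n) vec"
      have eqc: "(H - Hf z) *v v = (H - Hx) *v v + (Hx - Hf z) *v v"
        by (simp add: matrix_vector_mult_diff_rdistrib)
      have "norm ((H - Hf z) *v v) \<le> norm ((H - Hx) *v v) + norm ((Hx - Hf z) *v v)"
        unfolding eqc by (rule norm_triangle_ineq)
      also have "\<dots> \<le> ?n * (\<epsilon> * \<Delta>) * norm v + opnorm (Hx - Hf z) * norm v"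
        using nD[of v] opnorm_bound[of "Hx - Hf z" v] by linarith
      also have "\<dots> \<le> ?n * (\<epsilon> * \<Delta>) * norm v + (L * \<Delta>) * norm v"
      proof -
        have "opnorm (Hx - Hf z) \<le> L * norm (x - z)" unfolding Hx_def by (rule hess_lip)
        also have "\<dots> \<le> L * \<Delta>" using ns L0 by (intro mult_left_mono) (auto simp: s_def norm_minus_commute)
        finally show ?thesis by (intro add_left_mono mult_right_mono) auto
      qed
      also have "\<dots> \<le> (4 * A + L) * \<Delta> * norm v"
      proof -
        have Z: "0 \<le> \<epsilon> * \<Delta>" using eps0 Delta_pos by simp
        have "?n * (\<epsilon> * \<Delta>) \<le> 24 * (real ?n + sqrt ?n + 3/2) * (\<epsilon> * \<Delta>)"
          using ineq3[OF Z, of "real ?n" "sqrt ?n"] sq0 by simp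
        then have "?n * (\<epsilon> * \<Delta>) + L * \<Delta> \<le> (4 * A + L) * \<Delta>" by (simp add: A_eq algebra_simps)
        then have "(?n * (\<epsilon> * \<Delta>) + L * \<Delta>) * norm v \<le> (4 * A + L) * \<Delta> * norm v"
          by (rule mult_right_mono) simp
        then show ?thesis by (simp add: distrib_right)
      qed
      finally show "norm ((H - Hf z) *v v) \<le> (4 * A + L) * \<Delta> * norm v" .
    qed
    show ?thesis using r1 r2 r3 by blast
  qed
  show ?thesis
    unfolding Let_def A_def[symmetric, unfolded N_def Q_def]
    using main by blast
qed

end
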